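(* Let $\Omega\subset\mathbb{R}^n$ be a bounded open convex set with smooth boundary, let $\Lambda>0$, and let $u$ be a nonconstant continuous viscosity solution of $(N_\Lambda)$. Then $u$ changes sign in $\Omega$, i.e. both sets $\{x\in\Omega:u(x)>0\}$ and $\{x\in\Omega:u(x)<0\}$ are nonempty.
   Context: $\nu$ denotes the outer unit normal to $\partial\Omega$, and $\Delta_\infty u=\sum_{i,j=1}^n u_{x_i}u_{x_ix_j}u_{x_j}$. For $\Lambda\ge 0$, problem $(N_\Lambda)$ is $$\min\{|\nabla u|-\Lambda|u|,-\Delta_\infty u\}=0 \text{ in }\{u>0\}\cap\Omega,\quad \max\{\Lambda|u|-|\nabla u|,-\Delta_\infty u\}=0 \text{ in }\{u<0\}\cap\Omega,\quad -\Delta_\infty u=0 \text{ in }\{u=0\}\cap\Omega,\quad \tfrac{\partial u}{\partial\nu}=0 \text{ on }\partial\Omega,$$ understood in the viscosity sense as follows. For $s\in\mathbb{R}$, $\xi\in\mathbb{R}^n$, $X$ a symmetric $n\times n$ matrix, let $F(s,\xi,X)=\min\{|\xi|-\Lambda|s|,-\langle X\xi,\xi\rangle\}$, $G(s,\xi,X)=\max\{\Lambda|s|-|\xi|,-\langle X\xi,\xi\rangle\}$, $H(X)=-\langle X\xi,\xi\rangle$ (evaluated at the same $\xi$). For a function $u$ and point $x_0$, let $E$ denote $F$ if $u(x_0)>0$, $G$ if $u(x_0)<0$, $H$ if $u(x_0)=0$. An upper semicontinuous $u$ on $\overline\Omega$ is a viscosity subsolution if: for every $x_0\in\Omega$ and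 $\phi\in C^2(\Omega)$ with $\phi(x_0)=u(x_0)$ and $u(x)<\phi(x)$ for $x\neq x_0$, one has $E(\phi(x_0),\nabla\phi(x_0),\nabla^2\phi(x_0))\le 0$; and for every $x_0\in\partial\Omega$ and $\phi\in C^2(\overline\Omega)$ with the same touching property, $\min\{E(\phi(x_0),\nabla\phi(x_0),\nabla^2\phi(x_0)),\frac{\partial\phi}{\partial\nu}(x_0)\}\le 0$. A lower semicontinuous $u$ is a viscosity supersolution if the same holds with $u(x)>\phi(x)$ for $x\ne x_0$, with "$E\le 0$" replaced by "$E\ge 0$" at interior points and with $\max\{E(\phi(x_0),\nabla\phi(x_0),\nabla^2\phi(x_0)),\frac{\partial\phi}{\partial\nu}(x_0)\}\ge 0$ at boundary points. A continuous $u$ is a viscosity solution if it is both a sub- and a supersolution. *)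

theory Defs
  imports "HOL-Analysis.Analysis"
begin

fun Ck :: "nat \<Rightarrow> 'a set \<Rightarrow> ('a::euclidean_space \<Rightarrow> real) \<Rightarrow> bool" where
  "Ck 0 U f = continuous_on U f"
| "Ck (Suc k) U f =
     (f differentiable_on U \<and> (\<forall>b\<in>Basis. Ck k U (\<lambda>x. frechet_derivative f (at x) b)))"

definition smooth_on :: "'a set \<Rightarrow> ('a::euclidean_space \<Rightarrow> real) \<Rightarrow> bool" where
  "smooth_on U f \<longleftrightarrow> (\<forall>k. Ck k U f)"

definition grad :: "('a::euclidean_space \<Rightarrow> real) \<Rightarrow> 'a \<Rightarrow> 'a" where
  "grad f x = (\<Sum>b\<in>Basis. frechet_derivative f (at x) b *\<^sub>R b)"

definition hess_form :: "('a::euclidean_space \<Rightarrow> real) \<Rightarrow> 'a \<Rightarrow> 'a \<Rightarrow> real" where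
  "hess_form f x \<xi> = frechet_derivative (\<lambda>y. frechet_derivative f (at y) \<xi>) (at x) \<xi>"

definition smooth_boundary :: "'a::euclidean_space set \<Rightarrow> bool" where
  "smooth_boundary \<Omega> \<longleftrightarrow>
     (\<forall>p\<in>frontier \<Omega>. \<exists>U \<rho>. open U \<and> p \<in> U \<and> smooth_on U \<rho> \<and>
        (\<forall>x\<in>U. grad \<rho> x \<noteq> 0) \<and> \<Omega> \<inter> U = {x\<in>U. \<rho> x < 0})"

definition outer_normal :: "'a::euclidean_space set \<Rightarrow> 'a \<Rightarrow> 'a \<Rightarrow> bool" where
  "outer_normal \<Omega> p \<nu> \<longleftrightarrow>
     (\<exists>U \<rho>. open U \<and> p \<in> U \<and> smooth_on U \<rho> \<and>
        (\<forall>x\<in>U. grad \<rho> x \<noteq> 0) \<and> \<Omega> \<inter> U = {x\<in>U. \<rho> x < 0} \<and>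
        \<nu> = (1 / norm (grad \<rho> p)) *\<^sub>R grad \<rho> p)"

text \<open>The operator E (= F, G or H according to the sign of s); q stands for <X xi, xi>.\<close>
definition Eop :: "real \<Rightarrow> real \<Rightarrow> 'a::euclidean_space \<Rightarrow> real \<Rightarrow> real" where
  "Eop \<Lambda> s \<xi> q =
     (if s > 0 then min (norm \<xi> - \<Lambda> * \<bar>s\<bar>) (- q)
      else if s < 0 then max (\<Lambda> * \<bar>s\<bar> - norm \<xi>) (- q)
      else - q)"

text \<open>C^2 test functions on closure Omega: C^2 on an open neighbourhood of the closure.\<close>
definition visc_sub :: "real \<Rightarrow> 'a::euclidean_space set \<Rightarrow> ('a \<Rightarrow> real) \<Rightarrow> bool" where
  "visc_sub \<Lambda> \<Omega> u \<longleftrightarrow>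
    (\<forall>x0\<in>\<Omega>. \<forall>\<phi>. Ck 2 \<Omega> \<phi> \<and> \<phi> x0 = u x0 \<and> (\<forall>x\<in>\<Omega>. x \<noteq> x0 \<longrightarrow> u x < \<phi> x)
        \<longrightarrow> Eop \<Lambda> (\<phi> x0) (grad \<phi> x0) (hess_form \<phi> x0 (grad \<phi> x0)) \<le> 0) \<and>
    (\<forall>x0\<in>frontier \<Omega>. \<forall>\<phi> V. open V \<and> closure \<Omega> \<subseteq> V \<and> Ck 2 V \<phi> \<and> \<phi> x0 = u x0 \<and>
        (\<forall>x\<in>closure \<Omega>. x \<noteq> x0 \<longrightarrow> u x < \<phi> x)
        \<longrightarrow> (\<forall>\<nu>. outer_normal \<Omega> x0 \<nu> \<longrightarrow>
              min (Eop \<Lambda> (\<phi> x0) (grad \<phi> x0) (hess_form \<phi> x0 (grad \<phi> x0)))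
                  (grad \<phi> x0 \<bullet> \<nu>) \<le> 0))"

definition visc_super :: "real \<Rightarrow> 'a::euclidean_space set \<Rightarrow> ('a \<Rightarrow> real) \<Rightarrow> bool" where
  "visc_super \<Lambda> \<Omega> u \<longleftrightarrow>
    (\<forall>x0\<in>\<Omega>. \<forall>\<phi>. Ck 2 \<Omega> \<phi> \<and> \<phi> x0 = u x0 \<and> (\<forall>x\<in>\<Omega>. x \<noteq> x0 \<longrightarrow> u x > \<phi> x)
        \<longrightarrow> Eop \<Lambda> (\<phi> x0) (grad \<phi> x0) (hess_form \<phi> x0 (grad \<phi> x0)) \<ge> 0) \<and>
    (\<forall>x0\<in>frontier \<Omega>. \<forall>\<phi> V. open V \<and> closure \<Omega> \<subseteq> V \<and> Ck 2 V \<phi> \<and> \<phi> x0 = u x0 \<and>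
        (\<forall>x\<in>closure \<Omega>. x \<noteq> x0 \<longrightarrow> u x > \<phi> x)
        \<longrightarrow> (\<forall>\<nu>. outer_normal \<Omega> x0 \<nu> \<longrightarrow>
              max (Eop \<Lambda> (\<phi> x0) (grad \<phi> x0) (hess_form \<phi> x0 (grad \<phi> x0)))
                  (grad \<phi> x0 \<bullet> \<nu>) \<ge> 0))"

definition visc_solution :: "real \<Rightarrow> 'a::euclidean_space set \<Rightarrow> ('a \<Rightarrow> real) \<Rightarrow> bool" where
  "visc_solution \<Lambda> \<Omega> u \<longleftrightarrow>
     continuous_on (closure \<Omega>) u \<and> visc_sub \<Lambda> \<Omega> u \<and> visc_super \<Lambda> \<Omega> u"

end

theory Submission
  imports Defs
begin
lemma D1: fixes x y x1 :: "'a::euclidean_space"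
  shows "((\<lambda>x. c + \<sigma>*(\<beta>*((x-x1)\<bullet>(x-x1)) - \<epsilon>*exp(-k*((x-y)\<bullet>(x-y))))) has_derivative
   (\<lambda>h. \<sigma>*(2*\<beta>*((x-x1)\<bullet>h) + 2*\<epsilon>*k*exp(-k*((x-y)\<bullet>(x-y)))*((x-y)\<bullet>h)))) (at x)"
  by (auto intro!: derivative_eq_intros ext simp: algebra_simps inner_commute)

lemma D2: fixes x y x1 b :: "'a::euclidean_space"
  shows "((\<lambda>x. \<sigma>*(2*\<beta>*((x-x1)\<bullet>b) + 2*\<epsilon>*k*exp(-k*((x-y)\<bullet>(x-y)))*((x-y)\<bullet>b))) has_derivative
   (\<lambda>h. \<sigma>*(2*\<beta>*(h\<bullet>b) + 2*\<epsilon>*k*exp(-k*((x-y)\<bullet>(x-y)))*((h\<bullet>b) - 2*k*((x-y)\<bullet>h)*((x-y)\<bullet>b))))) (at x)"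
  by (auto intro!: derivative_eq_intros ext simp: algebra_simps inner_commute)

lemma test_fn:
  fixes y x1 :: "'a::euclidean_space" and c \<sigma> \<beta> \<epsilon> k :: real
  defines "\<phi> \<equiv> \<lambda>x. c + \<sigma>*(\<beta>*((x-x1)\<bullet>(x-x1)) - \<epsilon>*exp(-k*((x-y)\<bullet>(x-y))))"
  shows "Ck 2 S \<phi>"
    and "grad \<phi> x1 = (\<sigma>*2*\<epsilon>*k*exp(-k*((x1-y)\<bullet>(x1-y)))) *\<^sub>R (x1-y)"
    and "hess_form \<phi> x1 \<xi> = \<sigma>*(2*\<beta>*(\<xi>\<bullet>\<xi>) + 2*\<epsilon>*k*exp(-k*((x1-y)\<bullet>(x1-y)))*((\<xi>\<bullet>\<xi>) - 2*k*((x1-y)\<bullet>\<xi>)^2))"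
proof -
  have fd1: "frechet_derivative \<phi> (at x) = (\<lambda>h. \<sigma>*(2*\<beta>*((x-x1)\<bullet>h) + 2*\<epsilon>*k*exp(-k*((x-y)\<bullet>(x-y)))*((x-y)\<bullet>h)))" for x
    unfolding \<phi>_def by (rule frechet_derivative_at[OF D1, symmetric])
  have fd1b: "(\<lambda>x. frechet_derivative \<phi> (at x) b) = (\<lambda>x. \<sigma>*(2*\<beta>*((x-x1)\<bullet>b) + 2*\<epsilon>*k*exp(-k*((x-y)\<bullet>(x-y)))*((x-y)\<bullet>b)))" for b
    using fd1 by auto
  have fd2: "frechet_derivative (\<lambda>x. frechet_derivative \<phi> (at x) b) (at x) = (\<lambda>h. \<sigma>*(2*\<beta>*(h\<bullet>b) + 2*\<epsilon>*k*exp(-k*((x-y)\<bullet>(x-y)))*((h\<bullet>b) - 2*k*((x-y)\<bullet>h)*((x-y)\<bullet>b))))" for x b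
    unfolding fd1b by (rule frechet_derivative_at[OF D2, symmetric])
  have d1: "\<phi> differentiable_on S" unfolding \<phi>_def differentiable_on_def differentiable_def
    using D1 has_derivative_at_withinI by blast
  have d2: "(\<lambda>x. frechet_derivative \<phi> (at x) b) differentiable_on S" for b
    unfolding fd1b differentiable_on_def differentiable_def using D2 has_derivative_at_withinI by blast
  have c2: "continuous_on S (\<lambda>x. frechet_derivative (\<lambda>x. frechet_derivative \<phi> (at x) b) (at x) b')" for b b'
    unfolding fd2 by (intro continuous_intros)
  show "Ck 2 S \<phi>" using d1 d2 c2 by (simp add: numeral_2_eq_2)
  have "grad \<phi> x1 = (\<Sum>b\<in>Basis. (((\<sigma>*2*\<epsilon>*k*exp(-k*((x1-y)\<bullet>(x1-y)))) *\<^sub>R (x1-y)) \<bullet> b) *\<^sub>R b)"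
    unfolding grad_def fd1 by (intro sum.cong refl) (simp add: algebra_simps)
  then show "grad \<phi> x1 = (\<sigma>*2*\<epsilon>*k*exp(-k*((x1-y)\<bullet>(x1-y)))) *\<^sub>R (x1-y)"
    by (simp only: euclidean_representation)
  show "hess_form \<phi> x1 \<xi> = \<sigma>*(2*\<beta>*(\<xi>\<bullet>\<xi>) + 2*\<epsilon>*k*exp(-k*((x1-y)\<bullet>(x1-y)))*((\<xi>\<bullet>\<xi>) - 2*k*((x1-y)\<bullet>\<xi>)^2))"
    unfolding hess_form_def fd2 by (simp add: power2_eq_square algebra_simps)
qed
lemma grad_inner:
  fixes \<rho> :: "'a::euclidean_space \<Rightarrow> real"
  assumes "(\<rho> has_derivative D) (at x)"
  shows "grad \<rho> x \<bullet> h = D h"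
proof -
  have lin: "linear D" using assms has_derivative_linear by blast
  have fd: "frechet_derivative \<rho> (at x) = D" using frechet_derivative_at[OF assms] by simp
  have "D h = D (\<Sum>b\<in>Basis. (h \<bullet> b) *\<^sub>R b)" by (simp add: euclidean_representation)
  also have "\<dots> = (\<Sum>b\<in>Basis. (h \<bullet> b) * D b)"
    using lin by (simp add: linear_sum linear_scale o_def)
  also have "\<dots> = grad \<rho> x \<bullet> h"
    unfolding grad_def fd by (simp add: inner_sum_right inner_commute mult.commute)
  finally show ?thesis by simp
qed

lemma normal_pos:
  fixes \<Omega> :: "'a::euclidean_space set"
  assumes "open \<Omega>" "convex \<Omega>" "x1 \<in> frontier \<Omega>" "outer_normal \<Omega> x1 \<nu>" "y \<in> \<Omega>"
  shows "(x1 - y) \<bullet> \<nu> > 0"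
proof -
  obtain U \<rho> where U: "open U" "x1 \<in> U" "smooth_on U \<rho>" "\<forall>x\<in>U. grad \<rho> x \<noteq> 0"
      "\<Omega> \<inter> U = {x\<in>U. \<rho> x < 0}" and \<nu>: "\<nu> = (1 / norm (grad \<rho> x1)) *\<^sub>R grad \<rho> x1"
    using assms(4) unfolding outer_normal_def by blast
  have "Ck 1 U \<rho>" using U(3) unfolding smooth_on_def by blast
  then have "\<rho> differentiable_on U" by simp
  then have "\<rho> differentiable (at x1)"
    using U(1,2) differentiable_on_eq_differentiable_at by blast
  then have hasD: "(\<rho> has_derivative frechet_derivative \<rho> (at x1)) (at x1)"
    using frechet_derivative_works by blast
  define D where "D = frechet_derivative \<rho> (at x1)"
  define g where "g = grad \<rho> x1"
  have gD: "g \<bullet> h = D h" for h unfolding g_def D_def by (rule grad_inner[OF hasD])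
  have g0: "g \<noteq> 0" using U g_def by auto
  have x1n: "x1 \<notin> \<Omega>" using assms(1,3) by (simp add: frontier_def interior_open)
  have rho0: "\<rho> x1 \<ge> 0"
  proof (rule ccontr)
    assume "\<not> \<rho> x1 \<ge> 0"
    then have "x1 \<in> {x\<in>U. \<rho> x < 0}" using U(2) by simp
    then have "x1 \<in> \<Omega>" using U(5) by blast
    then show False using x1n by blast
  qed
  obtain r where r: "r > 0" "ball y r \<subseteq> \<Omega>" using assms(1,5) open_contains_ball by blast
  define z where "z = y + (r/2/norm g) *\<^sub>R g"
  have "dist y z = r/2" using g0 r unfolding z_def by (simp add: dist_norm)
  then have zin: "z \<in> \<Omega>" using r by auto
  define v where "v = z - x1"
  have Dv: "D v \<le> 0"
  proof (rule ccontr)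
    assume "\<not> D v \<le> 0"
    then have pos: "D v > 0" by simp
    have lin: "linear D" using hasD D_def has_derivative_linear by blast
    have "((\<lambda>t. \<rho> (x1 + t *\<^sub>R v)) has_derivative (\<lambda>t. D (t *\<^sub>R v))) (at 0)"
    proof -
      have l: "((\<lambda>t::real. x1 + t *\<^sub>R v) has_derivative (\<lambda>t. t *\<^sub>R v)) (at 0)"
        by (auto intro!: derivative_eq_intros)
      have "(\<rho> has_derivative D) (at (x1 + 0 *\<^sub>R v))" using hasD D_def by simp
      from has_derivative_compose[OF l this] show ?thesis by (simp add: o_def)
    qed
    then have "((\<lambda>t. \<rho> (x1 + t *\<^sub>R v)) has_real_derivative D v) (at 0)"
    proof -
      have "(\<lambda>t. D (t *\<^sub>R v)) = (*) (D v)" using lin by (auto simp: linear_scale mult.commute)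
      with \<open>((\<lambda>t. \<rho> (x1 + t *\<^sub>R v)) has_derivative (\<lambda>t. D (t *\<^sub>R v))) (at 0)\<close>
      show ?thesis unfolding has_field_derivative_def by simp
    qed
    from DERIV_pos_inc_right[OF this pos] obtain d where d: "d > 0"
      "\<And>h. h > 0 \<Longrightarrow> h < d \<Longrightarrow> \<rho> (x1 + 0 *\<^sub>R v) < \<rho> (x1 + (0 + h) *\<^sub>R v)" by blast
    obtain \<delta> where \<delta>: "\<delta> > 0" "ball x1 \<delta> \<subseteq> U" using U(1,2) open_contains_ball by blast
    define h where "h = min (d/2) (min (1/2) (\<delta> / (2 * (norm v + 1))))"
    have "\<delta> / (2 * (norm v + 1)) > 0" using \<delta>(1) by (intro divide_pos_pos) (auto intro: add_nonneg_pos)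
    then have h: "h > 0" "h < d" "h < 1" using d \<delta> unfolding h_def by auto
    have "h * norm v < \<delta>"
    proof -
      have "h * norm v \<le> (\<delta> / (2 * (norm v + 1))) * norm v"
        unfolding h_def by (intro mult_right_mono) auto
      also have "\<dots> < \<delta>"
      proof -
        have p: "2 * (norm v + 1) > 0" by (smt (verit) norm_ge_zero)
        have "\<delta> * norm v < \<delta> * (2 * (norm v + 1))"
          by (rule mult_strict_left_mono) (use \<delta> in \<open>smt (verit) norm_ge_zero\<close>)+
        then show ?thesis using p by (simp add: pos_divide_less_eq)
      qed
      finally show ?thesis .
    qed
    then have pU: "x1 + h *\<^sub>R v \<in> U" using \<delta> h by (auto simp: dist_norm)
    have "x1 \<in> closure \<Omega>" using assms(3) by (simp add: frontier_def)
    then have seg: "open_segment z x1 \<subseteq> \<Omega>"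
      using in_interior_closure_convex_segment[OF assms(2), of z x1] zin assms(1)
      by (simp add: interior_open)
    have "x1 + h *\<^sub>R v = (1 - (1-h)) *\<^sub>R z + (1-h) *\<^sub>R x1"
      unfolding v_def by (simp add: algebra_simps)
    moreover have "z \<noteq> x1" using zin x1n by auto
    ultimately have "x1 + h *\<^sub>R v \<in> open_segment z x1"
      using h by (auto simp: in_segment intro!: exI[of _ "1-h"])
    then have "x1 + h *\<^sub>R v \<in> \<Omega>" using seg by blast
    then have "\<rho> (x1 + h *\<^sub>R v) < 0" using pU U(5) by blast
    moreover have "\<rho> x1 < \<rho> (x1 + h *\<^sub>R v)" using d(2)[OF h(1,2)] by simp
    ultimately show False using rho0 by linarith
  qed
  have "g \<bullet> v = g \<bullet> (y - x1) + (r/2/norm g) * (g \<bullet> g)"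
    unfolding v_def z_def by (simp add: algebra_simps inner_diff_right)
  also have "(r/2/norm g) * (g \<bullet> g) = r/2 * norm g"
    using g0 by (simp add: power2_norm_eq_inner[symmetric] power2_eq_square)
  finally have "g \<bullet> (x1 - y) \<ge> r/2 * norm g" using Dv gD[of v]
    by (simp add: inner_diff_right algebra_simps)
  moreover have "r/2 * norm g > 0" using r g0 by simp
  ultimately have gp: "g \<bullet> (x1 - y) > 0" by linarith
  have "(x1 - y) \<bullet> \<nu> = (1 / norm g) * (g \<bullet> (x1 - y))"
    unfolding \<nu> g_def[symmetric] by (simp add: inner_commute)
  also have "\<dots> > 0" using gp g0 by simp
  finally show ?thesis .
qed

lemma closure_le:
  fixes f :: "'a::metric_space \<Rightarrow> real"
  assumes "continuous_on (closure S) f" "\<forall>x\<in>S. f x \<le> a" "x \<in> closure S"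
  shows "f x \<le> a"
proof (rule ccontr)
  assume "\<not> f x \<le> a"
  then have e: "f x - a > 0" by simp
  obtain \<delta> where \<delta>: "\<delta> > 0" "\<forall>x'\<in>closure S. dist x' x < \<delta> \<longrightarrow> dist (f x') (f x) < f x - a"
    using assms(1,3) e unfolding continuous_on_iff by meson
  obtain y where y: "y \<in> S" "dist y x < \<delta>" using closure_approachable assms(3) \<delta>(1) by blast
  have "y \<in> closure S" using y(1) closure_subset by blast
  then have "dist (f y) (f x) < f x - a" using \<delta>(2) y(2) by simp
  then show False using assms(2) y(1) by (auto simp: dist_real_def)
qed

lemma aux_max: "(s::real) < 0 \<Longrightarrow> q < 0 \<or> (n::real) < L * \<bar>s\<bar> \<Longrightarrow> max (L * \<bar>s\<bar> - n) (-q) > 0"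
  by (auto simp: less_max_iff_disj)
lemma aux_min: "(s::real) > 0 \<Longrightarrow> q > 0 \<or> (n::real) < L * \<bar>s\<bar> \<Longrightarrow> min (n - L * \<bar>s\<bar>) (-q) < 0"
  by (auto simp: min_less_iff_disj)

lemma Eop_neg:
  assumes "s \<le> 0" "q < 0 \<or> (s < 0 \<and> norm \<xi> < \<Lambda> * \<bar>s\<bar>)"
  shows "Eop \<Lambda> s \<xi> q > 0"
proof (cases "s < 0")
  case True
  have "q < 0 \<or> norm \<xi> < \<Lambda> * \<bar>s\<bar>" using assms(2) by blast
  from aux_max[OF True this] show ?thesis unfolding Eop_def using True by simp
next
  case False
  then have "s = 0" "q < 0" using assms by auto
  then show ?thesis unfolding Eop_def by simp
qed

lemma Eop_pos:
  assumes "s \<ge> 0" "q > 0 \<or> (s > 0 \<and> norm \<xi> < \<Lambda> * \<bar>s\<bar>)"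
  shows "Eop \<Lambda> s \<xi> q < 0"
proof (cases "s > 0")
  case True
  have "q > 0 \<or> norm \<xi> < \<Lambda> * \<bar>s\<bar>" using assms(2) by blast
  from aux_min[OF True this] show ?thesis unfolding Eop_def using True by simp
next
  case False
  then have "s = 0" "q > 0" using assms by auto
  then show ?thesis unfolding Eop_def by simp
qed

lemma sb_normal:
  assumes "smooth_boundary \<Omega>" "x1 \<in> frontier \<Omega>"
  shows "\<exists>\<nu>. outer_normal \<Omega> x1 \<nu>"
proof -
  obtain U \<rho> where "open U \<and> x1 \<in> U \<and> smooth_on U \<rho> \<and>
        (\<forall>x\<in>U. grad \<rho> x \<noteq> 0) \<and> \<Omega> \<inter> U = {x\<in>U. \<rho> x < 0}"
    using assms unfolding smooth_boundary_def by meson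
  then have "outer_normal \<Omega> x1 ((1 / norm (grad \<rho> x1)) *\<^sub>R grad \<rho> x1)"
    unfolding outer_normal_def by blast
  then show ?thesis by blast
qed

lemma sub_case:
  fixes \<Omega> :: "'a::euclidean_space set" and u :: "'a \<Rightarrow> real"
  assumes "open \<Omega>" "bounded \<Omega>" "convex \<Omega>" "smooth_boundary \<Omega>" "\<Lambda> > 0"
    and sub: "visc_sub \<Lambda> \<Omega> u" and cont: "continuous_on (closure \<Omega>) u"
    and le: "\<forall>x\<in>closure \<Omega>. u x \<le> 0" and y: "y \<in> \<Omega>" "u y < 0"
  shows False
proof -
  define \<mu> where "\<mu> = - u y / 2"
  have \<mu>: "\<mu> > 0" using y unfolding \<mu>_def by simp
  have yc: "y \<in> closure \<Omega>" using y closure_subset by blast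
  obtain \<rho> where \<rho>: "\<rho> > 0" "\<forall>x\<in>closure \<Omega>. dist x y < \<rho> \<longrightarrow> dist (u x) (u y) < \<mu>"
    using cont yc \<mu> unfolding continuous_on_iff by meson
  define k where "k = 1 / \<rho>^2"
  define \<epsilon> where "\<epsilon> = \<Lambda> * \<mu> * \<rho> / 2"
  have k: "k > 0" using \<rho> unfolding k_def by simp
  have \<epsilon>: "\<epsilon> > 0" using \<rho> \<mu> assms(5) unfolding \<epsilon>_def by simp
  define w where "w = (\<lambda>x. - \<epsilon> * exp (-k*((x-y)\<bullet>(x-y))))"
  have cw: "continuous_on (closure \<Omega>) (\<lambda>x. u x - w x)"
    unfolding w_def by (intro continuous_intros cont)
  have "compact (closure \<Omega>)" using assms(2) compact_closure by blast
  then obtain x1 where x1: "x1 \<in> closure \<Omega>" "\<forall>x\<in>closure \<Omega>. u x - w x \<le> u x1 - w x1"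
    using continuous_attains_sup[OF _ _ cw] yc by (metis empty_iff)
  define d where "d = x1 - y"
  define t where "t = d \<bullet> d"
  define e1 where "e1 = exp (-k*t)"
  define a where "a = 2*\<epsilon>*k*e1"
  define \<beta> where "\<beta> = a/4"
  define c where "c = u x1 - w x1"
  define \<phi> where "\<phi> = (\<lambda>x. c + 1*(\<beta>*((x-x1)\<bullet>(x-x1)) - \<epsilon>*exp(-k*((x-y)\<bullet>(x-y)))))"
  have a: "a > 0" using \<epsilon> k unfolding a_def e1_def by simp
  have Ck: "Ck 2 S \<phi>" for S unfolding \<phi>_def by (rule test_fn(1))
  define \<xi> where "\<xi> = a *\<^sub>R d"
  have gr: "grad \<phi> x1 = \<xi>" unfolding \<phi>_def test_fn(2) \<xi>_def a_def e1_def t_def d_def by simp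
  have hs0: "hess_form \<phi> x1 \<xi> = 1*(2*\<beta>*(\<xi>\<bullet>\<xi>) + 2*\<epsilon>*k*exp(-k*((x1-y)\<bullet>(x1-y)))*((\<xi>\<bullet>\<xi>) - 2*k*((x1-y)\<bullet>\<xi>)^2))"
    unfolding \<phi>_def by (rule test_fn(3))
  have i1: "\<xi>\<bullet>\<xi> = a^2*t" unfolding \<xi>_def t_def by (simp add: power2_eq_square)
  have i2: "(x1-y)\<bullet>\<xi> = a*t" unfolding \<xi>_def t_def d_def by simp
  have i3: "2*\<epsilon>*k*exp(-k*((x1-y)\<bullet>(x1-y))) = a" unfolding a_def e1_def t_def d_def by simp
  have hs: "hess_form \<phi> x1 \<xi> = a^3 * t * (3/2 - 2*k*t)"
    unfolding hs0 i1 i2 i3 \<beta>_def by (simp add: power2_eq_square power3_eq_cube algebra_simps)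
  have phi1: "\<phi> x1 = u x1" unfolding \<phi>_def c_def w_def by simp
  have strict: "u x < \<phi> x" if "x \<in> closure \<Omega>" "x \<noteq> x1" for x
  proof -
    have "u x - w x \<le> u x1 - w x1" using x1(2) that(1) by blast
    then have "u x \<le> c + w x" unfolding c_def by simp
    moreover have "\<beta> * ((x-x1)\<bullet>(x-x1)) > 0" using that(2) a unfolding \<beta>_def by simp
    ultimately show ?thesis unfolding \<phi>_def w_def by simp
  qed
  have s0: "u x1 \<le> 0" using le x1 by blast
  have E: "Eop \<Lambda> (\<phi> x1) (grad \<phi> x1) (hess_form \<phi> x1 (grad \<phi> x1)) > 0"
    unfolding gr hs phi1
  proof (rule Eop_neg[OF s0])
    show "a ^ 3 * t * (3 / 2 - 2 * k * t) < 0 \<or> u x1 < 0 \<and> norm \<xi> < \<Lambda> * \<bar>u x1\<bar>"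
    proof (cases "norm d < \<rho>")
      case True
      then have "dist x1 y < \<rho>" unfolding d_def by (simp add: dist_norm)
      then have "dist (u x1) (u y) < \<mu>" using \<rho>(2) x1(1) by blast
      then have ux: "u x1 < - \<mu>" unfolding \<mu>_def dist_real_def by auto
      have e1le: "e1 \<le> 1" unfolding e1_def t_def using k by simp
      have "norm \<xi> = a * norm d" unfolding \<xi>_def using a by simp
      also have "\<dots> \<le> 2*\<epsilon>*k * norm d" unfolding a_def using e1le \<epsilon> k
        by (intro mult_right_mono) (auto simp: mult_left_le)
      also have "\<dots> < 2*\<epsilon>*k*\<rho>" using True \<epsilon> k by simp
      also have "2*\<epsilon>*k*\<rho> = \<Lambda> * \<mu>" unfolding \<epsilon>_def k_def using \<rho> by (simp add: power2_eq_square field_simps)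
      also have "\<dots> < \<Lambda> * \<bar>u x1\<bar>" using mult_strict_left_mono[of \<mu> "- u x1" \<Lambda>] ux assms(5) \<mu> by simp
      finally show ?thesis using ux \<mu> by simp
    next
      case False
      have "t \<ge> \<rho>^2"
      proof -
        have "\<rho> \<le> norm d" using False by simp
        then have "\<rho>^2 \<le> (norm d)^2" using \<rho> by (intro power_mono) auto
        then show ?thesis unfolding t_def by (simp add: power2_norm_eq_inner)
      qed
      then have kt: "k * t \<ge> 1" unfolding k_def using \<rho> by (simp add: field_simps)
      have tp: "t > 0" using \<open>t \<ge> \<rho>^2\<close> \<rho> by (smt (verit) zero_less_power)
      have "3/2 - 2*k*t < 0" using kt by simp
      then show ?thesis using a tp by (simp add: mult_pos_neg)
    qed
  qed
  show False
  proof (cases "x1 \<in> \<Omega>")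
    case True
    have "Eop \<Lambda> (\<phi> x1) (grad \<phi> x1) (hess_form \<phi> x1 (grad \<phi> x1)) \<le> 0"
    proof -
      have A: "\<forall>x0\<in>\<Omega>. \<forall>\<phi>. Ck 2 \<Omega> \<phi> \<and> \<phi> x0 = u x0 \<and> (\<forall>x\<in>\<Omega>. x \<noteq> x0 \<longrightarrow> u x < \<phi> x)
        \<longrightarrow> Eop \<Lambda> (\<phi> x0) (grad \<phi> x0) (hess_form \<phi> x0 (grad \<phi> x0)) \<le> 0"
        using sub unfolding visc_sub_def by (rule conjunct1)
      have "\<forall>x\<in>\<Omega>. x \<noteq> x1 \<longrightarrow> u x < \<phi> x" using strict closure_subset by blast
      then show ?thesis using A True Ck[of \<Omega>] phi1 by simp
    qed
    then show False using E by simp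
  next
    case False
    then have fr: "x1 \<in> frontier \<Omega>" using x1(1) assms(1) by (simp add: frontier_def interior_open)
    obtain \<nu> where \<nu>: "outer_normal \<Omega> x1 \<nu>" using sb_normal[OF assms(4) fr] by blast
    have "min (Eop \<Lambda> (\<phi> x1) (grad \<phi> x1) (hess_form \<phi> x1 (grad \<phi> x1))) (grad \<phi> x1 \<bullet> \<nu>) \<le> 0"
    proof -
      have B: "\<forall>x0\<in>frontier \<Omega>. \<forall>\<phi> V. open V \<and> closure \<Omega> \<subseteq> V \<and> Ck 2 V \<phi> \<and> \<phi> x0 = u x0 \<and>
        (\<forall>x\<in>closure \<Omega>. x \<noteq> x0 \<longrightarrow> u x < \<phi> x)
        \<longrightarrow> (\<forall>\<nu>. outer_normal \<Omega> x0 \<nu> \<longrightarrow>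
              min (Eop \<Lambda> (\<phi> x0) (grad \<phi> x0) (hess_form \<phi> x0 (grad \<phi> x0)))
                  (grad \<phi> x0 \<bullet> \<nu>) \<le> 0)"
        using sub unfolding visc_sub_def by (rule conjunct2)
      have "\<forall>x\<in>closure \<Omega>. x \<noteq> x1 \<longrightarrow> u x < \<phi> x" using strict by blast
      then have C: "open UNIV \<and> closure \<Omega> \<subseteq> UNIV \<and> Ck 2 UNIV \<phi> \<and> \<phi> x1 = u x1 \<and> (\<forall>x\<in>closure \<Omega>. x \<noteq> x1 \<longrightarrow> u x < \<phi> x)"
        using Ck[of UNIV] phi1 by simp
      show ?thesis by (rule B[rule_format, OF fr C \<nu>])
    qed
    moreover have "grad \<phi> x1 \<bullet> \<nu> > 0"
      using normal_pos[OF assms(1,3) fr \<nu> y(1)] a unfolding gr \<xi>_def d_def by simp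
    ultimately show False using E by simp
  qed
qed

lemma aux_abs: "\<bar>(a::real) - b\<bar> < b / 2 \<Longrightarrow> b / 2 < a" by arith

lemma super_case:
  fixes \<Omega> :: "'a::euclidean_space set" and u :: "'a \<Rightarrow> real"
  assumes "open \<Omega>" "bounded \<Omega>" "convex \<Omega>" "smooth_boundary \<Omega>" "\<Lambda> > 0"
    and sub: "visc_super \<Lambda> \<Omega> u" and cont: "continuous_on (closure \<Omega>) u"
    and le: "\<forall>x\<in>closure \<Omega>. u x \<ge> 0" and y: "y \<in> \<Omega>" "u y > 0"
  shows False
proof -
  define \<mu> where "\<mu> = u y / 2"
  have \<mu>: "\<mu> > 0" using y unfolding \<mu>_def by simp
  have yc: "y \<in> closure \<Omega>" using y closure_subset by blast
  obtain \<rho> where \<rho>: "\<rho> > 0" "\<forall>x\<in>closure \<Omega>. dist x y < \<rho> \<longrightarrow> dist (u x) (u y) < \<mu>"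
    using cont yc \<mu> unfolding continuous_on_iff by meson
  define k where "k = 1 / \<rho>^2"
  define \<epsilon> where "\<epsilon> = \<Lambda> * \<mu> * \<rho> / 2"
  have k: "k > 0" using \<rho> unfolding k_def by simp
  have \<epsilon>: "\<epsilon> > 0" using \<rho> \<mu> assms(5) unfolding \<epsilon>_def by simp
  define w where "w = (\<lambda>x. - \<epsilon> * exp (-k*((x-y)\<bullet>(x-y))))"
  have cw: "continuous_on (closure \<Omega>) (\<lambda>x. u x + w x)"
    unfolding w_def by (intro continuous_intros cont)
  have "compact (closure \<Omega>)" using assms(2) compact_closure by blast
  then obtain x1 where x1: "x1 \<in> closure \<Omega>" "\<forall>x\<in>closure \<Omega>. u x1 + w x1 \<le> u x + w x"
    using continuous_attains_inf[OF _ _ cw] yc by (metis empty_iff)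
  define d where "d = x1 - y"
  define t where "t = d \<bullet> d"
  define e1 where "e1 = exp (-k*t)"
  define a where "a = 2*\<epsilon>*k*e1"
  define \<beta> where "\<beta> = a/4"
  define c where "c = u x1 + w x1"
  define \<phi> where "\<phi> = (\<lambda>x. c + (-1)*(\<beta>*((x-x1)\<bullet>(x-x1)) - \<epsilon>*exp(-k*((x-y)\<bullet>(x-y)))))"
  have a: "a > 0" using \<epsilon> k unfolding a_def e1_def by simp
  have Ck: "Ck 2 S \<phi>" for S unfolding \<phi>_def by (rule test_fn(1))
  define \<xi> where "\<xi> = (-a) *\<^sub>R d"
  have gr: "grad \<phi> x1 = \<xi>" unfolding \<phi>_def test_fn(2) \<xi>_def a_def e1_def t_def d_def by simp
  have hs0: "hess_form \<phi> x1 \<xi> = (-1)*(2*\<beta>*(\<xi>\<bullet>\<xi>) + 2*\<epsilon>*k*exp(-k*((x1-y)\<bullet>(x1-y)))*((\<xi>\<bullet>\<xi>) - 2*k*((x1-y)\<bullet>\<xi>)^2))"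
    unfolding \<phi>_def by (rule test_fn(3))
  have i1: "\<xi>\<bullet>\<xi> = a^2*t" unfolding \<xi>_def t_def by (simp add: power2_eq_square)
  have i2: "(x1-y)\<bullet>\<xi> = -(a*t)" unfolding \<xi>_def t_def d_def by simp
  have i3: "2*\<epsilon>*k*exp(-k*((x1-y)\<bullet>(x1-y))) = a" unfolding a_def e1_def t_def d_def by simp
  have hs: "hess_form \<phi> x1 \<xi> = -(a^3 * t * (3/2 - 2*k*t))"
    unfolding hs0 i1 i2 i3 \<beta>_def by (simp add: power2_eq_square power3_eq_cube algebra_simps)
  have phi1: "\<phi> x1 = u x1" unfolding \<phi>_def c_def w_def by simp
  have strict: "u x > \<phi> x" if "x \<in> closure \<Omega>" "x \<noteq> x1" for x
  proof -
    have "u x1 + w x1 \<le> u x + w x" using x1(2) that(1) by blast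
    then have "u x \<ge> c - w x" unfolding c_def by simp
    moreover have "\<beta> * ((x-x1)\<bullet>(x-x1)) > 0" using that(2) a unfolding \<beta>_def by simp
    ultimately show ?thesis unfolding \<phi>_def w_def by simp
  qed
  have s0: "u x1 \<ge> 0" using le x1 by blast
  have E: "Eop \<Lambda> (\<phi> x1) (grad \<phi> x1) (hess_form \<phi> x1 (grad \<phi> x1)) < 0"
    unfolding gr hs phi1
  proof (rule Eop_pos[OF s0])
    show "-(a ^ 3 * t * (3 / 2 - 2 * k * t)) > 0 \<or> u x1 > 0 \<and> norm \<xi> < \<Lambda> * \<bar>u x1\<bar>"
    proof (cases "norm d < \<rho>")
      case True
      then have "dist x1 y < \<rho>" unfolding d_def by (simp add: dist_norm)
      then have "dist (u x1) (u y) < \<mu>" using \<rho>(2) x1(1) by blast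
      then have ux: "u x1 > \<mu>" unfolding \<mu>_def dist_real_def by (rule aux_abs)
      have e1le: "e1 \<le> 1" unfolding e1_def t_def using k by simp
      have "norm \<xi> = a * norm d" unfolding \<xi>_def using a by simp
      also have "\<dots> \<le> 2*\<epsilon>*k * norm d" unfolding a_def using e1le \<epsilon> k
        by (intro mult_right_mono) (auto simp: mult_left_le)
      also have "\<dots> < 2*\<epsilon>*k*\<rho>" using True \<epsilon> k by simp
      also have "2*\<epsilon>*k*\<rho> = \<Lambda> * \<mu>" unfolding \<epsilon>_def k_def using \<rho> by (simp add: power2_eq_square field_simps)
      also have "\<dots> < \<Lambda> * \<bar>u x1\<bar>" using mult_strict_left_mono[of \<mu> "u x1" \<Lambda>] ux assms(5) \<mu> by simp
      finally show ?thesis using ux \<mu> by simp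
    next
      case False
      have "t \<ge> \<rho>^2"
      proof -
        have "\<rho> \<le> norm d" using False by simp
        then have "\<rho>^2 \<le> (norm d)^2" using \<rho> by (intro power_mono) auto
        then show ?thesis unfolding t_def by (simp add: power2_norm_eq_inner)
      qed
      then have kt: "k * t \<ge> 1" unfolding k_def using \<rho> by (simp add: field_simps)
      have tp: "t > 0" using \<open>t \<ge> \<rho>^2\<close> \<rho> by (smt (verit) zero_less_power)
      have "3/2 - 2*k*t < 0" using kt by simp
      then show ?thesis using a tp by (simp add: mult_pos_neg)
    qed
  qed
  show False
  proof (cases "x1 \<in> \<Omega>")
    case True
    have "Eop \<Lambda> (\<phi> x1) (grad \<phi> x1) (hess_form \<phi> x1 (grad \<phi> x1)) \<ge> 0"
    proof -
      have A: "\<forall>x0\<in>\<Omega>. \<forall>\<phi>. Ck 2 \<Omega> \<phi> \<and> \<phi> x0 = u x0 \<and> (\<forall>x\<in>\<Omega>. x \<noteq> x0 \<longrightarrow> u x > \<phi> x)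
        \<longrightarrow> Eop \<Lambda> (\<phi> x0) (grad \<phi> x0) (hess_form \<phi> x0 (grad \<phi> x0)) \<ge> 0"
        using sub unfolding visc_super_def by (rule conjunct1)
      have "\<forall>x\<in>\<Omega>. x \<noteq> x1 \<longrightarrow> u x > \<phi> x" using strict closure_subset by blast
      then show ?thesis using A True Ck[of \<Omega>] phi1 by simp
    qed
    then show False using E by simp
  next
    case False
    then have fr: "x1 \<in> frontier \<Omega>" using x1(1) assms(1) by (simp add: frontier_def interior_open)
    obtain \<nu> where \<nu>: "outer_normal \<Omega> x1 \<nu>" using sb_normal[OF assms(4) fr] by blast
    have "max (Eop \<Lambda> (\<phi> x1) (grad \<phi> x1) (hess_form \<phi> x1 (grad \<phi> x1))) (grad \<phi> x1 \<bullet> \<nu>) \<ge> 0"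
    proof -
      have B: "\<forall>x0\<in>frontier \<Omega>. \<forall>\<phi> V. open V \<and> closure \<Omega> \<subseteq> V \<and> Ck 2 V \<phi> \<and> \<phi> x0 = u x0 \<and>
        (\<forall>x\<in>closure \<Omega>. x \<noteq> x0 \<longrightarrow> u x > \<phi> x)
        \<longrightarrow> (\<forall>\<nu>. outer_normal \<Omega> x0 \<nu> \<longrightarrow>
              max (Eop \<Lambda> (\<phi> x0) (grad \<phi> x0) (hess_form \<phi> x0 (grad \<phi> x0)))
                  (grad \<phi> x0 \<bullet> \<nu>) \<ge> 0)"
        using sub unfolding visc_super_def by (rule conjunct2)
      have "\<forall>x\<in>closure \<Omega>. x \<noteq> x1 \<longrightarrow> u x > \<phi> x" using strict by blast
      then have C: "open UNIV \<and> closure \<Omega> \<subseteq> UNIV \<and> Ck 2 UNIV \<phi> \<and> \<phi> x1 = u x1 \<and> (\<forall>x\<in>closure \<Omega>. x \<noteq> x1 \<longrightarrow> u x > \<phi> x)"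
        using Ck[of UNIV] phi1 by simp
      show ?thesis by (rule B[rule_format, OF fr C \<nu>])
    qed
    moreover have "grad \<phi> x1 \<bullet> \<nu> < 0"
      using normal_pos[OF assms(1,3) fr \<nu> y(1)] a unfolding gr \<xi>_def d_def by simp
    ultimately show False using E by simp
  qed
qed

lemma near_neg:
  fixes f :: "'a::metric_space \<Rightarrow> real"
  assumes "continuous_on (closure S) f" "x0 \<in> closure S" "f x0 < 0"
  shows "\<exists>y\<in>S. f y < 0"
proof -
  have e: "- f x0 > 0" using assms(3) by simp
  obtain \<delta> where \<delta>: "\<delta> > 0" "\<forall>x'\<in>closure S. dist x' x0 < \<delta> \<longrightarrow> dist (f x') (f x0) < - f x0"
    using assms(1,2) e unfolding continuous_on_iff by meson
  obtain y where y: "y \<in> S" "dist y x0 < \<delta>" using closure_approachable assms(2) \<delta>(1) by blast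
  have "y \<in> closure S" using y(1) closure_subset by blast
  then have "dist (f y) (f x0) < - f x0" using \<delta>(2) y(2) by simp
  then have "f y < 0" unfolding dist_real_def by arith
  then show ?thesis using y(1) by blast
qed

theorem lemma4:
  fixes \<Omega> :: "'a::euclidean_space set" and u :: "'a \<Rightarrow> real" and \<Lambda> :: real
  assumes "open \<Omega>" and "bounded \<Omega>" and "convex \<Omega>" and "smooth_boundary \<Omega>"
    and "\<Lambda> > 0"
    and "visc_solution \<Lambda> \<Omega> u"
    and "\<not> (\<exists>c. \<forall>x\<in>closure \<Omega>. u x = c)"
  shows "(\<exists>x\<in>\<Omega>. u x > 0) \<and> (\<exists>x\<in>\<Omega>. u x < 0)"
proof -
  have cont: "continuous_on (closure \<Omega>) u" and sub: "visc_sub \<Lambda> \<Omega> u"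
    and sup: "visc_super \<Lambda> \<Omega> u" using assms(6) unfolding visc_solution_def by auto
  obtain x0 where x0: "x0 \<in> closure \<Omega>" "u x0 \<noteq> 0" using assms(7) by blast
  show ?thesis
  proof (intro conjI)
    show "\<exists>x\<in>\<Omega>. u x > 0"
    proof (rule ccontr)
      assume "\<not> (\<exists>x\<in>\<Omega>. u x > 0)"
      then have "\<forall>x\<in>\<Omega>. u x \<le> 0" by (simp add: not_less)
      then have le: "\<forall>x\<in>closure \<Omega>. u x \<le> 0" using closure_le[OF cont] by blast
      then have "u x0 < 0" using x0 by force
      then obtain y where "y \<in> \<Omega>" "u y < 0" using near_neg[OF cont x0(1)] by blast
      then show False using sub_case[OF assms(1-5) sub cont le] by blast
    qed
    show "\<exists>x\<in>\<Omega>. u x < 0"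
    proof (rule ccontr)
      assume "\<not> (\<exists>x\<in>\<Omega>. u x < 0)"
      then have "\<forall>x\<in>\<Omega>. - u x \<le> 0" by (simp add: not_less)
      then have "\<forall>x\<in>closure \<Omega>. - u x \<le> 0"
        using closure_le[of \<Omega> "\<lambda>x. - u x"] cont continuous_on_minus by blast
      then have le: "\<forall>x\<in>closure \<Omega>. u x \<ge> 0" by simp
      then have "- u x0 < 0" using x0 by force
      moreover have "continuous_on (closure \<Omega>) (\<lambda>x. - u x)" using cont by (intro continuous_intros)
      ultimately obtain y where "y \<in> \<Omega>" "- u y < 0" using near_neg[OF _ x0(1), of "\<lambda>x. - u x"] by blast
      then show False using super_case[OF assms(1-5) sup cont le] by simp
    qed
  qed
qed

end
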